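(* Let $A,J\in\mathbb{R}^{n\times n}$ and $0<T_{\min}\le T_{\max}$. Assume there exists a symmetric positive definite matrix $P\in\mathbb{R}^{n\times n}$ such that $$J^Te^{A^T\theta}Pe^{A\theta}J-P\prec 0\quad\text{for all }\theta\in[T_{\min},T_{\max}].$$ Then for any impulse sequence in $\mathbb{I}_{[T_{\min},T_{\max}]}$, the impulsive system (S) is globally asymptotically stable.
   Context: The impulsive system (S) is: $\dot x(t)=Ax(t)$ for $t\neq t_k$; $x^+(t)=Jx(t)$ for $t=t_k$, $k\in\{1,2,\dots\}$; $x(t_0)=x_0\in\mathbb{R}^n$. The state $x(t)$ is left-continuous and $x^+(t):=\lim_{s\downarrow t}x(s)$. The impulse times $\{t_1,t_2,\dots\}$ form a strictly increasing sequence in $(t_0,\infty)$, either finite, or infinite and unbounded, with $T_k:=t_{k+1}-t_k>\epsilon$ for some $\epsilon>0$. For a set $\mathcal{S}\subseteq(0,\infty)$, $\mathbb{I}_{\mathcal{S}}$ denotes the set of impulse sequences $\{t_1,t_2,\dots\}$ with $t_{k+1}-t_k\in\mathcal{S}$ for all $k$. For symmetric matrices, $M\prec 0$ ($M\succ0$) means negative (positive) definite. *)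

theory Defs
  imports "HOL-Analysis.Analysis"
begin

primrec mpow :: "real^'n^'n \<Rightarrow> nat \<Rightarrow> real^'n^'n" where
  "mpow M 0 = mat 1"
| "mpow M (Suc k) = M ** mpow M k"

definition mexp :: "real^'n^'n \<Rightarrow> real^'n^'n" where
  "mexp M = (\<Sum>k. (1 / fact k) *\<^sub>R mpow M k)"

definition pos_def :: "real^'n^'n \<Rightarrow> bool" where
  "pos_def P \<longleftrightarrow> transpose P = P \<and> (\<forall>x. x \<noteq> 0 \<longrightarrow> x \<bullet> (P *v x) > 0)"

definition neg_def :: "real^'n^'n \<Rightarrow> bool" where
  "neg_def M \<longleftrightarrow> transpose M = M \<and> (\<forall>x. x \<noteq> 0 \<longrightarrow> x \<bullet> (M *v x) < 0)"

definition impulse_seq :: "real \<Rightarrow> real \<Rightarrow> real \<Rightarrow> (nat \<Rightarrow> real) \<Rightarrow> bool" where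
  "impulse_seq Tmin Tmax t0 ts \<longleftrightarrow> t0 < ts 0 \<and>
     (\<forall>k. ts (Suc k) - ts k \<in> {Tmin..Tmax})"

text \<open>x is the (left-continuous) solution of the impulsive system (S) on [t0, infinity):
  it flows by x' = A x on [t0, ts 0] and on each (ts k, ts (k+1)] (derivatives one-sided
  at the endpoints, which gives left continuity at impulse times), and
  x^+(ts k) = J x(ts k).\<close>

definition impulsive_solution ::
  "real^'n^'n \<Rightarrow> real^'n^'n \<Rightarrow> real \<Rightarrow> (nat \<Rightarrow> real) \<Rightarrow> real^'n \<Rightarrow> (real \<Rightarrow> real^'n) \<Rightarrow> bool" where
  "impulsive_solution A J t0 ts x0 x \<longleftrightarrow>
     x t0 = x0 \<and>
     (\<forall>t\<in>{t0..ts 0}. (x has_vector_derivative (A *v x t)) (at t within {t0..ts 0})) \<and>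
     (\<forall>k. \<forall>t\<in>{ts k<..ts (Suc k)}.
        (x has_vector_derivative (A *v x t)) (at t within {ts k<..ts (Suc k)})) \<and>
     (\<forall>k. (x \<longlongrightarrow> J *v x (ts k)) (at_right (ts k)))"

definition GAS :: "real^'n^'n \<Rightarrow> real^'n^'n \<Rightarrow> real \<Rightarrow> (nat \<Rightarrow> real) \<Rightarrow> bool" where
  "GAS A J t0 ts \<longleftrightarrow>
     (\<forall>\<epsilon>>0. \<exists>\<delta>>0. \<forall>x0 x. impulsive_solution A J t0 ts x0 x \<and> norm x0 < \<delta> \<longrightarrow>
          (\<forall>t\<ge>t0. norm (x t) < \<epsilon>)) \<and>
     (\<forall>x0 x. impulsive_solution A J t0 ts x0 x \<longrightarrow> (x \<longlongrightarrow> 0) at_top)"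

end

theory Submission
  imports Defs
begin


lemma norm_sq_vec: "norm (v::'a::real_inner^'n)^2 = (\<Sum>i\<in>UNIV. norm(v$i)^2)"
  by (simp add: power2_norm_eq_inner inner_vec_def)

lemma norm_mv: fixes A :: "real^'n^'m" shows "norm (A *v x) \<le> norm A * norm x"
proof -
  have "norm (A *v x)^2 = (\<Sum>i\<in>UNIV. (A$i \<bullet> x)^2)"
    by (simp add: norm_sq_vec matrix_vector_mul_component)
  also have "\<dots> \<le> (\<Sum>i\<in>UNIV. norm (A$i)^2 * norm x^2)"
  proof (rule sum_mono)
    fix i
    have "\<bar>A$i \<bullet> x\<bar> \<le> \<bar>norm (A$i) * norm x\<bar>" using Cauchy_Schwarz_ineq2 by simp
    then show "(A$i \<bullet> x)^2 \<le> norm (A$i)^2 * norm x^2"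
      by (metis abs_le_square_iff power_mult_distrib)
  qed
  also have "\<dots> = (norm A * norm x)^2"
    by (simp add: norm_sq_vec[of A] power_mult_distrib sum_distrib_right)
  finally show ?thesis
    using power2_le_imp_le by fastforce
qed

lemma norm_transpose: fixes A :: "real^'n^'m" shows "norm (transpose A) = norm A"
proof -
  have "norm (transpose A)^2 = norm A^2"
    apply (simp add: norm_sq_vec[of "transpose A"] norm_sq_vec[of A] transpose_def)
    apply (simp add: norm_sq_vec)
    by (rule sum.swap)
  then show ?thesis by (simp add: power2_eq_iff_nonneg)
qed

lemma norm_mm: fixes A :: "real^'n^'m" and B :: "real^'p^'n"
  shows "norm (A ** B) \<le> norm A * norm B"
proof -
  have row: "(A ** B)$i = transpose B *v (A$i)" for i
    by (simp add: matrix_matrix_mult_def matrix_vector_mult_def transpose_def vec_eq_iff mult.commute)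
  have "norm (A ** B)^2 = (\<Sum>i\<in>UNIV. norm ((A ** B)$i)^2)" by (rule norm_sq_vec)
  also have "\<dots> \<le> (\<Sum>i\<in>UNIV. norm B^2 * norm (A$i)^2)"
    apply (rule sum_mono)
    unfolding row
    by (metis norm_mv norm_ge_zero norm_transpose power_mono power_mult_distrib)
  also have "\<dots> = (norm A * norm B)^2"
    by (simp add: norm_sq_vec[of A] power_mult_distrib sum_distrib_left mult.commute)
  finally show ?thesis
    using power2_le_imp_le by fastforce
qed

lemma matrix_add_rdistrib: "((A::real^'n^'m) + B) ** C = A ** C + B ** C"
  by (simp add: matrix_matrix_mult_def vec_eq_iff algebra_simps sum.distrib)



lemma bb_mm: "bounded_bilinear (\<lambda>(A::real^'n^'m) (B::real^'p^'n). A ** B)"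
  apply (rule bounded_bilinear.intro)
  apply (simp_all add: matrix_add_ldistrib matrix_add_rdistrib scalar_matrix_assoc matrix_scalar_ac)
  apply (rule exI[of _ 1]) using norm_mm by auto

lemma bb_mv: "bounded_bilinear (\<lambda>(A::real^'n^'m) (x::real^'n). A *v x)"
  apply (rule bounded_bilinear.intro)
  apply (simp_all add: matrix_vector_right_distrib matrix_vector_mult_add_rdistrib matrix_vector_mult_scaleR scaleR_matrix_vector_assoc[symmetric])
  apply (rule exI[of _ 1]) using norm_mv by (auto simp: mult.commute)



lemma mpow_commute: "M ** mpow M k = mpow M k ** M"
  by (induction k) (simp_all add: matrix_mul_assoc)

lemma mpow_scale: "mpow (t *\<^sub>R M) k = t^k *\<^sub>R mpow M k"
  by (induction k) (simp_all add: scalar_matrix_assoc[symmetric] matrix_scalar_ac)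

lemma mpow_transpose: "transpose (mpow M k) = mpow (transpose M) k"
  by (induction k) (simp_all add: matrix_transpose_mul mpow_commute)

lemma norm_mpow: fixes M :: "real^'n^'n" shows "norm (mpow M k) \<le> norm (mat 1 :: real^'n^'n) * norm M ^ k"
proof (induction k)
  case (Suc k)
  have "norm (mpow M (Suc k)) \<le> norm M * norm (mpow M k)" using norm_mm by simp
  also have "\<dots> \<le> norm M * (norm (mat 1 :: real^'n^'n) * norm M ^ k)"
    using Suc by (simp add: mult_left_mono)
  finally show ?case by (simp add: algebra_simps)
qed simp

lemma summable_mexp: "summable (\<lambda>k. (1 / fact k) *\<^sub>R mpow (M::real^'n^'n) k)"
proof (rule summable_comparison_test')
  show "summable (\<lambda>k. norm (mat 1 :: real^'n^'n) * (inverse (fact k) * norm M ^ k))"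
    by (intro summable_mult summable_exp)
  fix k :: nat
  show "norm ((1 / fact k) *\<^sub>R mpow M k) \<le> norm (mat 1 :: real^'n^'n) * (inverse (fact k) * norm M ^ k)"
    using norm_mpow[of M k] by (simp add: field_simps divide_right_mono)
qed

lemma mexp_scale: "mexp (t *\<^sub>R M) = (\<Sum>k. (t^k / fact k) *\<^sub>R mpow M k)"
  by (simp add: mexp_def mpow_scale)

lemma summable_mexp_scale: "summable (\<lambda>k. (t^k / fact k) *\<^sub>R mpow (M::real^'n^'n) k)"
  using summable_mexp[of "t *\<^sub>R M"] by (simp add: mpow_scale)

lemma mexp_zero: "mexp (0 *\<^sub>R M) = mat 1"
proof -
  have "(\<lambda>k. ((0::real)^k / fact k) *\<^sub>R mpow M k) = (\<lambda>k. if k = 0 then mpow M k else 0)"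
    by (auto simp: fun_eq_iff)
  then have "(\<lambda>k. ((0::real)^k / fact k) *\<^sub>R mpow M k) sums mpow M 0"
    using sums_single[of 0 "mpow M"] by simp
  then show ?thesis unfolding mexp_scale by (simp add: sums_iff)
qed

lemma bl_transpose: "bounded_linear (transpose :: real^'n^'m \<Rightarrow> real^'m^'n)"
  apply (rule bounded_linear_intro[of _ 1])
    apply (simp add: transpose_def vec_eq_iff)
   apply (simp add: transpose_def vec_eq_iff)
  apply (simp add: norm_transpose)
  done

lemma mexp_transpose: "transpose (mexp M) = mexp (transpose M)"
proof -
  have "(\<lambda>k. transpose ((1 / fact k) *\<^sub>R mpow M k)) sums transpose (mexp M)"
    unfolding mexp_def by (rule bounded_linear.sums[OF bl_transpose]) (rule summable_sums[OF summable_mexp])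
  then show ?thesis
    by (simp add: mexp_def sums_iff transpose_scalar mpow_transpose)
qed



lemma bl_mmleft: "bounded_linear (\<lambda>B. (M::real^'n^'m) ** (B::real^'p^'n))"
  using bounded_bilinear.bounded_linear_right[OF bb_mm] .

lemma mm_sum: "(M::real^'n^'m) ** sum (f::_\<Rightarrow>real^'p^'n) S = (\<Sum>i\<in>S. M ** f i)"
  using linear_sum[OF bounded_linear.linear[OF bl_mmleft]] by (simp add: o_def)

lemma mexp_deriv:
  fixes M :: "real^'n^'n"
  shows "((\<lambda>t. mexp (t *\<^sub>R M)) has_derivative (\<lambda>h. h *\<^sub>R (M ** mexp (t *\<^sub>R M)))) (at t)"
proof -
  define a where "a = (\<lambda>i (s::real). (s^i / fact i) *\<^sub>R mpow M i)"
  define E where "E = (\<lambda>s. \<Sum>i. a i s)"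
  have E: "mexp (s *\<^sub>R M) = E s" for s by (simp add: E_def a_def mexp_scale)
  have sa: "summable (\<lambda>i. a i s)" for s unfolding a_def by (rule summable_mexp_scale)
  define R where "R = \<bar>t\<bar> + 1"
  define S where "S = {-R<..<R}"
  have tS: "t \<in> S" unfolding S_def R_def by auto
  define f' where "f' = (\<lambda>i (s::real) (h::real). h *\<^sub>R (if i = 0 then 0 else M ** a (i - 1) s))"
  have der: "(a i has_derivative f' i x) (at x within S)" if "x \<in> S" for i x
  proof (cases i)
    case 0
    then show ?thesis by (simp add: a_def f'_def)
  next
    case (Suc j)
    have d0: "((\<lambda>s. s^(Suc j) * inverse (fact (Suc j))) has_real_derivative (real (Suc j) * x^j * inverse (fact (Suc j)))) (at x within S)"
      by (rule derivative_eq_intros refl)+ simp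
    have eq: "real (Suc j) * x^j * inverse (fact (Suc j)) = x^j / fact j"
      by (simp add: fact_Suc field_simps del: of_nat_Suc)
    have d1: "((\<lambda>s. s^(Suc j) / fact (Suc j)) has_real_derivative (x^j / fact j)) (at x within S)"
      using d0 unfolding eq by (simp add: divide_inverse)
    have "((\<lambda>s. (s^(Suc j) / fact (Suc j)) *\<^sub>R mpow M (Suc j)) has_derivative
          (\<lambda>h. (h * (x^j / fact j)) *\<^sub>R mpow M (Suc j))) (at x within S)"
      using has_derivative_scaleR_left[OF d1[unfolded has_field_derivative_def]]
      by (simp add: mult.commute)
    moreover have "(\<lambda>h. (h * (x^j / fact j)) *\<^sub>R mpow M (Suc j)) = f' i x"
      by (simp add: f'_def a_def Suc fun_eq_iff matrix_scalar_ac scalar_matrix_assoc[symmetric])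
    ultimately show ?thesis using Suc by (simp add: a_def)
  qed
  have ul: "uniform_limit S (\<lambda>n s. \<Sum>i<n. a i s) E sequentially"
    unfolding E_def
  proof (rule Weierstrass_m_test)
    show "summable (\<lambda>i. norm (mat 1 :: real^'n^'n) * (inverse (fact i) * (R * norm M) ^ i))"
      by (intro summable_mult summable_exp)
    fix i s assume "s \<in> S"
    then have sR: "\<bar>s\<bar> \<le> R" unfolding S_def by auto
    have "norm (a i s) = \<bar>s\<bar>^i / fact i * norm (mpow M i)"
      by (simp add: a_def power_abs)
    also have "\<dots> \<le> R^i / fact i * (norm (mat 1 :: real^'n^'n) * norm M ^ i)"
      apply (rule mult_mono)
      using sR norm_mpow[of M i] by (auto intro!: divide_right_mono power_mono)
    finally show "norm (a i s) \<le> norm (mat 1 :: real^'n^'n) * (inverse (fact i) * (R * norm M) ^ i)"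
      by (simp add: field_simps power_mult_distrib)
  qed
  have unif: "\<forall>\<^sub>F n in sequentially. \<forall>x\<in>S. \<forall>h. norm ((\<Sum>i<n. f' i x h) - h *\<^sub>R (M ** E x)) \<le> e * norm h"
    if e: "e > 0" for e
  proof -
    have nM: "norm M + 1 > 0" using norm_ge_zero[of M] by linarith
    have "e / (norm M + 1) > 0" using e nM by (rule divide_pos_pos)
    from uniform_limitD[OF ul this]
    have ev: "\<forall>\<^sub>F m in sequentially. \<forall>x\<in>S. dist (\<Sum>i<m. a i x) (E x) < e / (norm M + 1)" .
    then obtain N where N: "\<And>m x. m \<ge> N \<Longrightarrow> x \<in> S \<Longrightarrow> dist (\<Sum>i<m. a i x) (E x) < e / (norm M + 1)"
      by (auto simp: eventually_sequentially)
    show ?thesis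
      unfolding eventually_sequentially
    proof (intro exI[of _ "Suc N"] allI impI ballI)
      fix n x h assume n: "Suc N \<le> n" and x: "x \<in> S"
      then obtain m where m: "n = Suc m" "m \<ge> N" by (cases n) auto
      have sumeq: "(\<Sum>i<n. f' i x h) = h *\<^sub>R (M ** (\<Sum>i<m. a i x))"
        unfolding m sum.lessThan_Suc_shift
        by (simp add: f'_def mm_sum scaleR_sum_right)
      have "norm ((\<Sum>i<n. f' i x h) - h *\<^sub>R (M ** E x)) = \<bar>h\<bar> * norm (M ** ((\<Sum>i<m. a i x) - E x))"
      proof -
        have "h *\<^sub>R (M ** (\<Sum>i<m. a i x)) - h *\<^sub>R (M ** E x) = h *\<^sub>R (M ** ((\<Sum>i<m. a i x) - E x))"
          using linear_diff[OF bounded_linear.linear[OF bl_mmleft[of M]], of "\<Sum>i<m. a i x" "E x"] by (simp add: algebra_simps scaleR_add_right[symmetric])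
        then show ?thesis unfolding sumeq by (simp only: norm_scaleR)
      qed
      also have "\<dots> \<le> \<bar>h\<bar> * (norm M * norm ((\<Sum>i<m. a i x) - E x))"
        by (simp add: mult_left_mono norm_mm)
      also have "\<dots> \<le> \<bar>h\<bar> * ((norm M + 1) * (e / (norm M + 1)))"
        apply (rule mult_left_mono)
         apply (rule mult_mono)
        using N[OF m(2) x] by (auto simp: dist_norm)
      also have "\<dots> = e * norm h" using nM by (simp add: field_simps)
      finally show "norm ((\<Sum>i<n. f' i x h) - h *\<^sub>R (M ** E x)) \<le> e * norm h" .
    qed
  qed
  have "\<exists>g. \<forall>x\<in>S. (\<lambda>n. a n x) sums g x \<and> (g has_derivative (\<lambda>h. h *\<^sub>R (M ** E x))) (at x within S)"
    apply (rule has_derivative_series[where f' = f' and x = t])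
        apply (simp add: S_def)
       apply (rule der, assumption)
      apply (rule unif, assumption)
     apply (rule tS)
    by (rule summable_sums[OF sa])
  then obtain g where g: "\<And>x. x \<in> S \<Longrightarrow> (\<lambda>n. a n x) sums g x"
    "\<And>x. x \<in> S \<Longrightarrow> (g has_derivative (\<lambda>h. h *\<^sub>R (M ** E x))) (at x within S)" by blast
  have "(E has_derivative (\<lambda>h. h *\<^sub>R (M ** E t))) (at t within S)"
    apply (rule has_derivative_transform_within_open[OF g(2)[OF tS], of S])
    using g(1) by (auto simp: S_def E_def sums_iff R_def)
  then have "(E has_derivative (\<lambda>h. h *\<^sub>R (M ** E t))) (at t)"
    using at_within_open[OF tS] by (simp add: S_def)
  then show ?thesis unfolding E by simp
qed

lemma mexp_vderiv:
  fixes M :: "real^'n^'n"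
  shows "((\<lambda>t. mexp (t *\<^sub>R M)) has_vector_derivative (M ** mexp (t *\<^sub>R M))) (at t within X)"
  using has_derivative_at_withinI[OF mexp_deriv[where t=t and M=M]] unfolding has_vector_derivative_def .

lemma mexp_cont: "continuous_on X (\<lambda>t. mexp (t *\<^sub>R (M::real^'n^'n)))"
  by (intro continuous_at_imp_continuous_on ballI has_derivative_continuous[OF mexp_deriv])



lemma mexp_0: "mexp (0::real^'n^'n) = mat 1"
  using mexp_zero[of "0::real^'n^'n"] by simp

lemma mexp_shift_vderiv:
  fixes A :: "real^'n^'n"
  shows "((\<lambda>s. mexp ((s - a) *\<^sub>R A) *v y) has_vector_derivative (A *v (mexp ((s - a) *\<^sub>R A) *v y))) (at s within X)"
proof -
  have d1: "((\<lambda>s. s - a) has_vector_derivative 1) (at s within X)"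
    by (auto intro!: derivative_eq_intros)
  have "(((\<lambda>u. mexp (u *\<^sub>R A)) \<circ> (\<lambda>s. s - a)) has_vector_derivative (1 *\<^sub>R (A ** mexp ((s - a) *\<^sub>R A)))) (at s within X)"
    by (rule vector_diff_chain_within[OF d1 mexp_vderiv])
  then have "((\<lambda>s. mexp ((s - a) *\<^sub>R A)) has_vector_derivative (A ** mexp ((s - a) *\<^sub>R A))) (at s within X)"
    by (simp add: o_def)
  from bounded_linear.has_vector_derivative[OF bounded_bilinear.bounded_linear_left[OF bb_mv, of y] this]
  show ?thesis by (simp add: matrix_vector_mul_assoc)
qed

lemma ode_unique:
  fixes A :: "real^'n^'n" and x :: "real \<Rightarrow> real^'n"
  assumes ab: "a < b"
    and der: "\<forall>t\<in>{a<..b}. (x has_vector_derivative (A *v x t)) (at t within {a<..b})"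
    and lim: "(x \<longlongrightarrow> y) (at_right a)"
  shows "\<forall>t\<in>{a<..b}. x t = mexp ((t - a) *\<^sub>R A) *v y"
proof
  fix t assume t: "t \<in> {a<..b}"
  define z where "z = (\<lambda>s. mexp ((s - a) *\<^sub>R A) *v y)"
  define d where "d = (\<lambda>s. x s - z s)"
  define L where "L = norm A"
  define ph where "ph = (\<lambda>s. exp (- 2 * L * (s - a)) * (d s \<bullet> d s))"
  have zc: "isCont z a"
    using has_vector_derivative_continuous[OF mexp_shift_vderiv[where A=A and a=a and y=y and s=a and X=UNIV]] by (simp add: z_def)
  have za: "z a = y" by (simp add: z_def mexp_0)
  have "(z \<longlongrightarrow> y) (at_right a)"
    using tendsto_within_subset[OF zc[unfolded isCont_def za]] by simp
  then have dlim: "(d \<longlongrightarrow> 0) (at_right a)"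
    unfolding d_def using tendsto_diff[OF lim] by fastforce
  have phlim: "(ph \<longlongrightarrow> 0) (at_right a)"
  proof -
    have el: "((\<lambda>s. exp (- 2 * L * (s - a))) \<longlongrightarrow> exp (- 2 * L * (a - a))) (at_right a)"
      by (intro tendsto_intros)
    have "(ph \<longlongrightarrow> exp (- 2 * L * (a - a)) * ((0::real^'n) \<bullet> 0)) (at_right a)"
      unfolding ph_def by (rule tendsto_mult[OF el tendsto_inner[OF dlim dlim]])
    then show ?thesis by simp
  qed
  have dder: "(d has_vector_derivative (A *v d s)) (at s within {a<..b})" if s: "s \<in> {a<..b}" for s
  proof -
    have "(d has_vector_derivative (A *v x s - A *v z s)) (at s within {a<..b})"
      unfolding d_def z_def
      by (intro has_vector_derivative_diff der[rule_format, OF s] mexp_shift_vderiv)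
    then show ?thesis by (simp add: d_def matrix_vector_mult_diff_distrib)
  qed
  define D where "D = (\<lambda>s. exp (- 2 * L * (s - a)) * (d s \<bullet> (A *v d s) + (A *v d s) \<bullet> d s)
                       + (- 2 * L * exp (- 2 * L * (s - a))) * (d s \<bullet> d s))"
  have phder: "(ph has_real_derivative D s) (at s within {a<..b})" if s: "s \<in> {a<..b}" for s
  proof -
    have dd: "((\<lambda>s. d s \<bullet> d s) has_real_derivative (d s \<bullet> (A *v d s) + (A *v d s) \<bullet> d s)) (at s within {a<..b})"
      unfolding has_real_derivative_iff_has_vector_derivative
      by (rule bounded_bilinear.has_vector_derivative[OF bounded_bilinear_inner dder[OF s] dder[OF s]])
    have de: "((\<lambda>s. exp (- 2 * L * (s - a))) has_real_derivative (- 2 * L * exp (- 2 * L * (s - a)))) (at s within {a<..b})"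
      by (rule derivative_eq_intros refl)+ simp
    show ?thesis unfolding ph_def D_def by (rule DERIV_mult'[OF de dd])
  qed
  have Dnp: "D s \<le> 0" for s
  proof -
    have "d s \<bullet> (A *v d s) \<le> norm (d s) * norm (A *v d s)" by (rule norm_cauchy_schwarz)
    also have "\<dots> \<le> norm (d s) * (L * norm (d s))"
      unfolding L_def by (intro mult_left_mono norm_mv) auto
    finally have "d s \<bullet> (A *v d s) \<le> L * (d s \<bullet> d s)"
      by (simp add: power2_norm_eq_inner[symmetric] power2_eq_square algebra_simps)
    then show ?thesis unfolding D_def
      by (simp add: inner_commute algebra_simps)
  qed
  have mono: "ph t \<le> ph s" if s: "a < s" "s < t" for s
  proof -
    have "\<exists>u\<in>{s<..<t}. ph t - ph s = (\<lambda>h. h * D u) (t - s)"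
    proof (rule mvt_simple[OF s(2)])
      fix u assume "s \<le> u" "u \<le> t"
      then have u: "u \<in> {a<..b}" using s t by auto
      have "(ph has_real_derivative D u) (at u within {s..t})"
        by (rule has_field_derivative_subset[OF phder[OF u]]) (use s t in auto)
      then show "(ph has_derivative (\<lambda>h. h * D u)) (at u within {s..t})"
        by (simp add: has_field_derivative_def mult.commute[of _ "D u"])
    qed
    then obtain u where "ph t - ph s = (t - s) * D u" by (auto simp: mult.commute)
    moreover have "(t - s) * D u \<le> 0" using Dnp[of u] s by (simp add: mult_nonneg_nonpos)
    ultimately show ?thesis by simp
  qed
  have "ph t \<le> 0"
  proof (rule tendsto_lowerbound[OF phlim])
    show "\<forall>\<^sub>F s in at_right a. ph t \<le> ph s"
      using eventually_at_right_real[of a t] t by (auto elim!: eventually_mono intro: mono)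
  qed simp
  then have "d t \<bullet> d t \<le> 0" unfolding ph_def
    by (simp add: mult_le_0_iff)
  then have "d t = 0" by (metis inner_ge_zero inner_eq_zero_iff order_antisym)
  then show "x t = mexp ((t - a) *\<^sub>R A) *v y" by (simp add: d_def z_def)
qed



lemma sol_formula0:
  fixes A J :: "real^'n^'n"
  assumes sol: "impulsive_solution A J t0 ts x0 x" and seq: "impulse_seq Tmin Tmax t0 ts"
  shows "\<forall>t\<in>{t0..ts 0}. x t = mexp ((t - t0) *\<^sub>R A) *v x0"
proof
  fix t assume t: "t \<in> {t0..ts 0}"
  have lt: "t0 < ts 0" using seq by (simp add: impulse_seq_def)
  have x0: "x t0 = x0" using sol by (simp add: impulsive_solution_def)
  have der: "\<forall>s\<in>{t0..ts 0}. (x has_vector_derivative (A *v x s)) (at s within {t0..ts 0})"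
    using sol by (simp add: impulsive_solution_def)
  show "x t = mexp ((t - t0) *\<^sub>R A) *v x0"
  proof (cases "t = t0")
    case True then show ?thesis by (simp add: x0 mexp_0)
  next
    case False
    then have t': "t \<in> {t0<..ts 0}" using t by auto
    have der': "\<forall>s\<in>{t0<..ts 0}. (x has_vector_derivative (A *v x s)) (at s within {t0<..ts 0})"
    proof
      fix s assume s: "s \<in> {t0<..ts 0}"
      then have "s \<in> {t0..ts 0}" by auto
      show "(x has_vector_derivative (A *v x s)) (at s within {t0<..ts 0})"
        by (rule has_vector_derivative_within_subset[OF der[rule_format, OF \<open>s \<in> {t0..ts 0}\<close>]]) auto
    qed
    have "continuous (at t0 within {t0..ts 0}) x"
      using has_vector_derivative_continuous[OF der[rule_format, of t0]] lt by auto
    then have "(x \<longlongrightarrow> x0) (at_right t0)"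
      using x0 by (simp add: continuous_within at_within_Icc_at_right[OF lt])
    from ode_unique[OF lt der' this] t' show ?thesis by blast
  qed
qed

lemma sol_formulak:
  fixes A J :: "real^'n^'n"
  assumes sol: "impulsive_solution A J t0 ts x0 x" and seq: "impulse_seq Tmin Tmax t0 ts"
    and Tmin: "0 < Tmin"
  shows "\<forall>t\<in>{ts k<..ts (Suc k)}. x t = mexp ((t - ts k) *\<^sub>R A) *v (J *v x (ts k))"
proof -
  have lt: "ts k < ts (Suc k)" using seq Tmin by (auto simp: impulse_seq_def dest: spec[of _ k])
  have der: "\<forall>s\<in>{ts k<..ts (Suc k)}. (x has_vector_derivative (A *v x s)) (at s within {ts k<..ts (Suc k)})"
    using sol by (simp add: impulsive_solution_def)
  have lim: "(x \<longlongrightarrow> J *v x (ts k)) (at_right (ts k))"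
    using sol by (simp add: impulsive_solution_def)
  show ?thesis by (rule ode_unique[OF lt der lim])
qed

lemma ts_strict:
  assumes seq: "impulse_seq Tmin Tmax t0 ts" and Tmin: "0 < Tmin"
  shows "strict_mono ts"
proof (rule strict_monoI_Suc)
  fix k show "ts k < ts (Suc k)" using seq Tmin by (auto simp: impulse_seq_def dest: spec[of _ k])
qed

lemma ts_lower:
  assumes seq: "impulse_seq Tmin Tmax t0 ts"
  shows "ts k \<ge> ts 0 + real k * Tmin"
proof (induction k)
  case (Suc k)
  have "ts (Suc k) - ts k \<ge> Tmin" using seq by (auto simp: impulse_seq_def dest: spec[of _ k])
  then show ?case using Suc by (simp add: algebra_simps)
qed simp

lemma time_locate:
  assumes seq: "impulse_seq Tmin Tmax t0 ts" and Tmin: "0 < Tmin" and t: "t > ts 0"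
  shows "\<exists>k. ts k < t \<and> t \<le> ts (Suc k)"
proof -
  obtain n :: nat where n: "(t - ts 0) / Tmin < real n" using reals_Archimedean2 by blast
  then have "t \<le> ts n" using ts_lower[OF seq, of n] Tmin by (simp add: field_simps)
  then have ex: "\<exists>n. t \<le> ts n" by blast
  define m where "m = (LEAST n. t \<le> ts n)"
  have m1: "t \<le> ts m" unfolding m_def by (rule LeastI_ex[OF ex])
  have m0: "m \<noteq> 0"
  proof
    assume "m = 0" then show False using m1 t by simp
  qed
  then obtain k where k: "m = Suc k" by (cases m) auto
  have "\<not> t \<le> ts k" using not_less_Least[of k "\<lambda>n. t \<le> ts n"] k unfolding m_def by simp
  then have "ts k < t" by simp
  then show ?thesis using m1 k by blast
qed

lemma inner_vm: "(x::real^'n) \<bullet> (y v* M) = (M *v x) \<bullet> (y::real^'m)"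
  by (metis dot_lmul_matrix inner_commute)

lemma quad_eq:
  fixes A J P :: "real^'n^'n"
  shows "z \<bullet> ((transpose J ** mexp (\<theta> *\<^sub>R transpose A) ** P ** mexp (\<theta> *\<^sub>R A) ** J - P) *v z)
    = (mexp (\<theta> *\<^sub>R A) *v (J *v z)) \<bullet> (P *v (mexp (\<theta> *\<^sub>R A) *v (J *v z))) - z \<bullet> (P *v z)"
proof -
  have T: "mexp (\<theta> *\<^sub>R transpose A) = transpose (mexp (\<theta> *\<^sub>R A))"
    by (simp add: mexp_transpose transpose_scalar)
  show ?thesis
    unfolding T matrix_vector_mult_diff_rdistrib inner_diff_right
    by (simp add: matrix_vector_mul_assoc[symmetric] inner_vm)
qed



lemma quad_scale: "(c *\<^sub>R z) \<bullet> (P *v (c *\<^sub>R z)) = c^2 * (z \<bullet> (P *v (z::real^'n)))"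
  by (simp add: matrix_vector_mult_scaleR power2_eq_square)

lemma sphere_ne: "sphere (0::real^'n) 1 \<noteq> {}"
proof -
  have "axis undefined (1::real) \<in> sphere (0::real^'n) 1" by simp
  then show ?thesis by blast
qed

lemma mexp_cont': "continuous_on X f \<Longrightarrow> continuous_on X (\<lambda>x. mexp (f x *\<^sub>R (M::real^'n^'n)))"
  by (rule continuous_on_compose2[OF mexp_cont[of UNIV M]]) auto

lemma cont_mv: "continuous_on X f \<Longrightarrow> continuous_on X g \<Longrightarrow> continuous_on X (\<lambda>x. (f x::real^'n^'m) *v (g x :: real^'n))"
  by (rule bounded_bilinear.continuous_on[OF bb_mv])

lemma posdef_nonneg: "pos_def P \<Longrightarrow> 0 \<le> z \<bullet> (P *v z)"
  unfolding pos_def_def by (cases "z = 0") (auto intro: less_imp_le)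

lemma posdef_lower:
  fixes P :: "real^'n^'n" assumes P: "pos_def P"
  shows "\<exists>\<mu>>0. \<forall>z. \<mu> * norm z ^ 2 \<le> z \<bullet> (P *v z)"
proof -
  let ?S = "sphere (0::real^'n) 1"
  have c: "continuous_on ?S (\<lambda>z. z \<bullet> (P *v z))"
    by (intro continuous_intros cont_mv)
  obtain u where u: "u \<in> ?S" "\<And>z. z \<in> ?S \<Longrightarrow> u \<bullet> (P *v u) \<le> z \<bullet> (P *v z)"
    using continuous_attains_inf[OF compact_sphere sphere_ne c] by blast
  have "u \<noteq> 0" using u(1) by auto
  then have pos: "u \<bullet> (P *v u) > 0" using P unfolding pos_def_def by auto
  show ?thesis
  proof (intro exI[of _ "u \<bullet> (P *v u)"] conjI allI pos)
    fix z :: "real^'n"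
    show "u \<bullet> (P *v u) * norm z ^ 2 \<le> z \<bullet> (P *v z)"
    proof (cases "z = 0")
      case False
      then have nz: "norm z > 0" by simp
      have "(inverse (norm z) *\<^sub>R z) \<in> ?S" using nz by simp
      then have "u \<bullet> (P *v u) \<le> (inverse (norm z) *\<^sub>R z) \<bullet> (P *v (inverse (norm z) *\<^sub>R z))"
        by (rule u(2))
      also have "\<dots> = (inverse (norm z))^2 * (z \<bullet> (P *v z))" by (rule quad_scale)
      finally have "u \<bullet> (P *v u) \<le> (inverse (norm z))^2 * (z \<bullet> (P *v z))" .
      then have "u \<bullet> (P *v u) * norm z ^ 2 \<le> (inverse (norm z))^2 * (z \<bullet> (P *v z)) * norm z ^ 2"
        by (simp add: mult_right_mono)
      also have "\<dots> = z \<bullet> (P *v z)" using nz by (simp add: field_simps)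
      finally show ?thesis .
    qed simp
  qed
qed

lemma quad_upper: "z \<bullet> (P *v z) \<le> norm P * norm (z::real^'n) ^ 2"
proof -
  have "z \<bullet> (P *v z) \<le> norm z * norm (P *v z)" by (rule norm_cauchy_schwarz)
  also have "\<dots> \<le> norm z * (norm P * norm z)" by (intro mult_left_mono norm_mv) auto
  finally show ?thesis by (simp add: power2_eq_square algebra_simps)
qed

lemma E_bound:
  fixes A :: "real^'n^'n"
  shows "\<exists>B\<ge>0. \<forall>s\<in>{0..S}. \<forall>w. norm (mexp (s *\<^sub>R A) *v w) \<le> B * norm w"
proof -
  have ne: "{0..max S 0} \<noteq> {}" by auto
  have c: "continuous_on {0..max S 0} (\<lambda>s. norm (mexp (s *\<^sub>R A)))"
    by (intro continuous_on_norm mexp_cont)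
  obtain s0 where s0: "\<And>s. s \<in> {0..max S 0} \<Longrightarrow> norm (mexp (s *\<^sub>R A)) \<le> norm (mexp (s0 *\<^sub>R A))"
    using continuous_attains_sup[OF compact_Icc ne c] by blast
  show ?thesis
  proof (intro exI[of _ "norm (mexp (s0 *\<^sub>R A))"] conjI ballI allI norm_ge_zero)
    fix s w assume s: "s \<in> {0..S}"
    have "norm (mexp (s *\<^sub>R A) *v w) \<le> norm (mexp (s *\<^sub>R A)) * norm w" by (rule norm_mv)
    also have "\<dots> \<le> norm (mexp (s0 *\<^sub>R A)) * norm w"
      using s0[of s] s by (intro mult_right_mono) auto
    finally show "norm (mexp (s *\<^sub>R A) *v w) \<le> norm (mexp (s0 *\<^sub>R A)) * norm w" .
  qed
qed

lemma contraction:
  fixes A J P :: "real^'n^'n"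
  assumes le: "Tmin \<le> Tmax" and P: "pos_def P"
   and neg: "\<forall>\<theta>\<in>{Tmin..Tmax}. \<forall>z. z \<noteq> 0 \<longrightarrow>
      (mexp (\<theta> *\<^sub>R A) *v (J *v z)) \<bullet> (P *v (mexp (\<theta> *\<^sub>R A) *v (J *v z))) < z \<bullet> (P *v z)"
  shows "\<exists>\<rho>. 0 \<le> \<rho> \<and> \<rho> < 1 \<and> (\<forall>\<theta>\<in>{Tmin..Tmax}. \<forall>z.
      (mexp (\<theta> *\<^sub>R A) *v (J *v z)) \<bullet> (P *v (mexp (\<theta> *\<^sub>R A) *v (J *v z))) \<le> \<rho> * (z \<bullet> (P *v z)))"
proof -
  define V where "V = (\<lambda>z::real^'n. z \<bullet> (P *v z))"
  define F where "F = (\<lambda>\<theta> (z::real^'n). mexp (\<theta> *\<^sub>R A) *v (J *v z))"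
  define K where "K = {Tmin..Tmax} \<times> sphere (0::real^'n) 1"
  define G where "G = (\<lambda>p. V (F (fst p) (snd p)) / V (snd p))"
  have Vpos: "V z > 0" if "z \<noteq> 0" for z using P that unfolding pos_def_def V_def by auto
  have Vnn: "V z \<ge> 0" for z unfolding V_def by (rule posdef_nonneg[OF P])
  have Kne: "K \<noteq> {}" using le sphere_ne unfolding K_def by auto
  have Kc: "compact K" unfolding K_def by (intro compact_Times compact_Icc compact_sphere)
  have c1: "continuous_on K (\<lambda>p. V (F (fst p) (snd p)))"
    unfolding V_def F_def by (intro continuous_intros cont_mv mexp_cont')
  have c2: "continuous_on K (\<lambda>p. V (snd p))"
    unfolding V_def by (intro continuous_intros cont_mv)
  have "V (snd p) \<noteq> 0" if "p \<in> K" for p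
  proof -
    from that have "snd p \<noteq> 0" unfolding K_def by auto
    then show ?thesis using Vpos by force
  qed
  then have cont: "continuous_on K G"
    unfolding G_def by (intro continuous_on_divide c1 c2) auto
  obtain p0 where p0: "p0 \<in> K" "\<And>p. p \<in> K \<Longrightarrow> G p \<le> G p0"
    using continuous_attains_sup[OF Kc Kne cont] by blast
  have p0n: "snd p0 \<noteq> 0" "fst p0 \<in> {Tmin..Tmax}" using p0(1) unfolding K_def by auto
  have "G p0 < 1"
    using neg[rule_format, OF p0n(2) p0n(1)] Vpos[OF p0n(1)]
    unfolding G_def by (simp add: V_def F_def)
  moreover have "G p0 \<ge> 0" unfolding G_def using Vnn by simp
  moreover have "V (F \<theta> z) \<le> G p0 * V z" if th: "\<theta> \<in> {Tmin..Tmax}" for \<theta> z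
  proof (cases "z = 0")
    case True then show ?thesis by (simp add: V_def F_def)
  next
    case False
    then have nz: "norm z > 0" by simp
    define w where "w = inverse (norm z) *\<^sub>R z"
    have wK: "(\<theta>, w) \<in> K" unfolding K_def w_def using th nz by simp
    have Fw: "F \<theta> w = inverse (norm z) *\<^sub>R F \<theta> z"
      by (simp add: F_def w_def matrix_vector_mult_scaleR)
    have Vw: "V w = (inverse (norm z))^2 * V z" "V (F \<theta> w) = (inverse (norm z))^2 * V (F \<theta> z)"
      unfolding Fw unfolding V_def w_def by (simp_all only: quad_scale)
    have "G (\<theta>, w) \<le> G p0" by (rule p0(2)[OF wK])
    then have "V (F \<theta> w) \<le> G p0 * V w"
      using Vpos[of w] nz unfolding G_def w_def by (simp add: pos_divide_le_eq)
    then show ?thesis unfolding Vw using nz by simp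
  qed
  ultimately show ?thesis unfolding V_def F_def by blast
qed



theorem lemma1:
  fixes A J P :: "real^'n^'n" and Tmin Tmax t0 :: real and ts :: "nat \<Rightarrow> real"
  assumes "0 < Tmin" and "Tmin \<le> Tmax"
    and "pos_def P"
    and "\<forall>\<theta>\<in>{Tmin..Tmax}.
           neg_def (transpose J ** mexp (\<theta> *\<^sub>R transpose A) ** P ** mexp (\<theta> *\<^sub>R A) ** J - P)"
    and "impulse_seq Tmin Tmax t0 ts"
  shows "GAS A J t0 ts"
proof -
  note seq = assms(5)
  have Tpos: "0 < Tmin" by (rule assms(1))
  define V where "V = (\<lambda>z::real^'n. z \<bullet> (P *v z))"
  define E where "E = (\<lambda>\<theta>. mexp (\<theta> *\<^sub>R A))"
  have neg: "\<forall>\<theta>\<in>{Tmin..Tmax}. \<forall>z. z \<noteq> 0 \<longrightarrow>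
      (mexp (\<theta> *\<^sub>R A) *v (J *v z)) \<bullet> (P *v (mexp (\<theta> *\<^sub>R A) *v (J *v z))) < z \<bullet> (P *v z)"
    using assms(4) unfolding neg_def_def by (auto simp: quad_eq)
  obtain \<rho> where \<rho>: "0 \<le> \<rho>" "\<rho> < 1"
    and contr: "\<And>\<theta> z. \<theta> \<in> {Tmin..Tmax} \<Longrightarrow> V (E \<theta> *v (J *v z)) \<le> \<rho> * V z"
    using contraction[OF assms(2) assms(3) neg] unfolding V_def E_def by blast
  obtain \<mu> where \<mu>: "\<mu> > 0" and low: "\<And>z. \<mu> * norm z^2 \<le> V z"
    using posdef_lower[OF assms(3)] unfolding V_def by blast
  have up: "\<And>z. V z \<le> norm P * norm z^2" unfolding V_def by (rule quad_upper)
  define S0 where "S0 = max Tmax (ts 0 - t0)"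
  obtain B where B: "B \<ge> 0" and Bb: "\<And>s w. s \<in> {0..S0} \<Longrightarrow> norm (E s *v w) \<le> B * norm w"
    using E_bound[of S0 A] unfolding E_def by blast
  define c1 where "c1 = B^2 * norm J^2 * norm P * B^2 / \<mu>"
  define C where "C = c1 + B^2"
  have c10: "c1 \<ge> 0" unfolding c1_def using \<mu> by simp
  have C0: "C \<ge> 0" unfolding C_def using c10 by simp
  have lt0: "t0 < ts 0" using seq by (simp add: impulse_seq_def)
  have gap: "\<And>k. ts (Suc k) - ts k \<in> {Tmin..Tmax}" using seq by (simp add: impulse_seq_def)
  have smono: "strict_mono ts" by (rule ts_strict[OF seq Tpos])
  have key: "(\<forall>t\<in>{t0..ts 0}. norm (x t)^2 \<le> C * norm x0^2) \<and>
             (\<forall>k. \<forall>t\<in>{ts k<..ts (Suc k)}. norm (x t)^2 \<le> C * \<rho>^k * norm x0^2)"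
    if sol: "impulsive_solution A J t0 ts x0 x" for x0 x
  proof -
    have f0: "\<And>t. t \<in> {t0..ts 0} \<Longrightarrow> x t = E (t - t0) *v x0"
      using sol_formula0[OF sol seq] unfolding E_def by blast
    have fk: "\<And>k t. t \<in> {ts k<..ts (Suc k)} \<Longrightarrow> x t = E (t - ts k) *v (J *v x (ts k))"
      using sol_formulak[OF sol seq Tpos] unfolding E_def by blast
    have b0: "norm (x t) \<le> B * norm x0" if t: "t \<in> {t0..ts 0}" for t
    proof -
      have "t - t0 \<in> {0..S0}" using t by (auto simp: S0_def)
      then show ?thesis using f0[OF t] Bb by auto
    qed
    have z0: "norm (x (ts 0)) \<le> B * norm x0" using b0 lt0 by auto
    have step: "x (ts (Suc k)) = E (ts (Suc k) - ts k) *v (J *v x (ts k))" for k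
    proof -
      have "ts k < ts (Suc k)" using smono by (simp add: strict_mono_def)
      then show ?thesis using fk[of "ts (Suc k)" k] by auto
    qed
    have Vk: "V (x (ts k)) \<le> \<rho>^k * V (x (ts 0))" for k
    proof (induction k)
      case (Suc k)
      have "V (x (ts (Suc k))) \<le> \<rho> * V (x (ts k))" unfolding step by (rule contr[OF gap])
      also have "\<dots> \<le> \<rho> * (\<rho>^k * V (x (ts 0)))" using Suc \<rho>(1) by (intro mult_left_mono)
      finally show ?case by simp
    qed simp
    have zk: "norm (x (ts k))^2 \<le> \<rho>^k * (norm P * B^2 / \<mu>) * norm x0^2" for k
    proof -
      have "\<mu> * norm (x (ts k))^2 \<le> \<rho>^k * V (x (ts 0))" using low[of "x (ts k)"] Vk[of k] by linarith
      also have "\<dots> \<le> \<rho>^k * (norm P * norm (x (ts 0))^2)" using up \<rho>(1) by (intro mult_left_mono) auto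
      also have "\<dots> \<le> \<rho>^k * (norm P * (B * norm x0)^2)"
        using z0 \<rho>(1) by (intro mult_left_mono power_mono) auto
      finally have "\<mu> * norm (x (ts k))^2 \<le> \<rho>^k * (norm P * (B * norm x0)^2)" .
      then show ?thesis using \<mu> by (simp add: field_simps power_mult_distrib)
    qed
    show ?thesis
    proof
      show "\<forall>t\<in>{t0..ts 0}. norm (x t)^2 \<le> C * norm x0^2"
      proof
        fix t assume t: "t \<in> {t0..ts 0}"
        have "norm (x t)^2 \<le> (B * norm x0)^2" using b0[OF t] by (intro power_mono) auto
        also have "\<dots> = B^2 * norm x0^2" by (simp add: power_mult_distrib)
        also have "\<dots> \<le> C * norm x0^2" unfolding C_def using c10 by (intro mult_right_mono) auto
        finally show "norm (x t)^2 \<le> C * norm x0^2" .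
      qed
      show "\<forall>k. \<forall>t\<in>{ts k<..ts (Suc k)}. norm (x t)^2 \<le> C * \<rho>^k * norm x0^2"
      proof (intro allI ballI)
        fix k t assume t: "t \<in> {ts k<..ts (Suc k)}"
        have "t - ts k \<in> {0..S0}" using t gap[of k] by (auto simp: S0_def)
        then have "norm (x t) \<le> B * norm (J *v x (ts k))" using fk[OF t] Bb by auto
        also have "\<dots> \<le> B * (norm J * norm (x (ts k)))" using B norm_mv by (intro mult_left_mono)
        finally have "norm (x t)^2 \<le> (B * (norm J * norm (x (ts k))))^2" by (intro power_mono) auto
        also have "\<dots> = B^2 * norm J^2 * norm (x (ts k))^2" by (simp add: power_mult_distrib)
        also have "\<dots> \<le> B^2 * norm J^2 * (\<rho>^k * (norm P * B^2 / \<mu>) * norm x0^2)"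
          using zk by (intro mult_left_mono) auto
        also have "\<dots> = c1 * (\<rho>^k * norm x0^2)" unfolding c1_def by (simp add: field_simps)
        also have "\<dots> \<le> C * (\<rho>^k * norm x0^2)" unfolding C_def using \<rho>(1) by (intro mult_right_mono) auto
        finally show "norm (x t)^2 \<le> C * \<rho>^k * norm x0^2" by (simp add: mult.assoc)
      qed
    qed
  qed
  have bound_all: "norm (x t)^2 \<le> C * norm x0^2"
    if sol: "impulsive_solution A J t0 ts x0 x" and t: "t \<ge> t0" for x0 x t
  proof (cases "t \<le> ts 0")
    case True then show ?thesis using key[OF sol] t by auto
  next
    case False
    then obtain k where k: "ts k < t" "t \<le> ts (Suc k)" using time_locate[OF seq Tpos] by force
    then have "norm (x t)^2 \<le> C * \<rho>^k * norm x0^2" using key[OF sol] by auto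
    also have "\<dots> \<le> C * 1 * norm x0^2"
      using \<rho> C0 by (intro mult_right_mono mult_left_mono power_le_one) auto
    finally show ?thesis by simp
  qed
  have conv: "(x \<longlongrightarrow> 0) at_top" if sol: "impulsive_solution A J t0 ts x0 x" for x0 x
  proof (rule tendstoI)
    fix e :: real assume e: "e > 0"
    have "(\<lambda>n. C * norm x0^2 * \<rho>^n) \<longlonglongrightarrow> C * norm x0^2 * 0"
      using \<rho> by (intro tendsto_mult tendsto_const LIMSEQ_power_zero) auto
    then have "\<forall>\<^sub>F n in sequentially. C * norm x0^2 * \<rho>^n < e^2"
      using e by (intro order_tendstoD(2)) auto
    then obtain N where N: "C * norm x0^2 * \<rho>^N < e^2" by (auto simp: eventually_sequentially)
    show "\<forall>\<^sub>F t in at_top. dist (x t) 0 < e"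
      unfolding eventually_at_top_linorder
    proof (intro exI[of _ "ts N + 1"] allI impI)
      fix t assume t: "ts N + 1 \<le> t"
      have "ts 0 \<le> ts N" using smono by (simp add: strict_mono_less_eq)
      then have "t > ts 0" using t by simp
      then obtain k where k: "ts k < t" "t \<le> ts (Suc k)" using time_locate[OF seq Tpos] by force
      have "N \<le> k"
      proof (rule ccontr)
        assume "\<not> N \<le> k"
        then have "Suc k \<le> N" by simp
        then have "ts (Suc k) \<le> ts N" using smono by (simp add: strict_mono_less_eq)
        then show False using k t by simp
      qed
      have "norm (x t)^2 \<le> C * \<rho>^k * norm x0^2" using key[OF sol] k by auto
      also have "\<dots> \<le> C * \<rho>^N * norm x0^2"
        using \<rho> C0 \<open>N \<le> k\<close> by (intro mult_right_mono mult_left_mono power_decreasing) auto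
      also have "\<dots> < e^2" using N by (simp add: mult_ac)
      finally have "norm (x t)^2 < e^2" .
      then show "dist (x t) 0 < e" using e by (simp add: power_less_imp_less_base)
    qed
  qed
  show ?thesis
    unfolding GAS_def
  proof (intro conjI allI impI)
    fix \<epsilon> :: real assume eps: "\<epsilon> > 0"
    define \<delta> where "\<delta> = \<epsilon> / sqrt (C + 1)"
    have sq: "sqrt (C + 1) > 0" using C0 by simp
    have d0: "\<delta> > 0" unfolding \<delta>_def using eps sq by simp
    have dd: "(C + 1) * \<delta>^2 = \<epsilon>^2" unfolding \<delta>_def using C0 by (simp add: power_divide)
    show "\<exists>\<delta>>0. \<forall>x0 x. impulsive_solution A J t0 ts x0 x \<and> norm x0 < \<delta> \<longrightarrow> (\<forall>t\<ge>t0. norm (x t) < \<epsilon>)"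
    proof (intro exI[of _ \<delta>] conjI d0 allI impI)
      fix x0 x t assume H: "impulsive_solution A J t0 ts x0 x \<and> norm x0 < \<delta>" and t: "t0 \<le> t"
      have "norm (x t)^2 \<le> C * norm x0^2" using bound_all H t by blast
      also have "\<dots> \<le> (C + 1) * norm x0^2" by (simp add: distrib_right)
      also have "\<dots> < (C + 1) * \<delta>^2"
        using H C0 by (intro mult_strict_left_mono power_strict_mono) auto
      finally have "norm (x t)^2 < \<epsilon>^2" unfolding dd .
      then show "norm (x t) < \<epsilon>" using eps by (simp add: power_less_imp_less_base)
    qed
  next
    fix x0 x assume "impulsive_solution A J t0 ts x0 x"
    then show "(x \<longlongrightarrow> 0) at_top" by (rule conv)
  qed
qed

end
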